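(* Let $\Omega$ be a non-empty list of atoms and let $A,B$ be formulas with frontier $\Omega$. Whenever the joins in question exist, $A\vee_\Omega B=\varphi(\psi(A)\sqcup_\Omega\psi(B))$ and $\bot_\Omega=\varphi(0_\Omega)$, where $\vee_\Omega$ and $\bot_\Omega$ denote binary join and least element in $\mathrm{Frm}_\Omega$, and $\sqcup_\Omega$ and $0_\Omega$ denote binary join and least element in $\mathrm{Ctx}_\Omega$.
   Context: Formulas are built from atoms ($p,q,\dots$) by a binary product: every formula is an atom or $A\bullet B$. A context is a finite (possibly empty) list of formulas; commas denote concatenation. The frontier $\mathrm{fr}$ is the ordered list of atom occurrences ($\mathrm{fr}(p)=p$, $\mathrm{fr}(A\bullet B)=\mathrm{fr}(A),\mathrm{fr}(B)$; for contexts, concatenate). The sequent calculus has exactly four rules (no weakening, contraction or exchange): ($\bullet L$) from $A,B,\Delta\vdash C$ infer $A\bullet B,\Delta\vdash C$ (the product must be leftmost); ($\bullet R$) from $\Gamma\vdash A$ and $\Delta\vdash B$ infer $\Gamma,\Delta\vdash A\bullet B$; ($id$) $A\vdash A$; ($cut$) from $\Theta\vdash A$ and $\Gamma,A,\Delta\vdash B$ infer $\Gamma,\Theta,\Delta\vdash B$; derivable means conclusion of a finite derivation tree with no undischarged premises. The Tamari order on formulas is the least preorder with $(A\bullet B)\bullet C\le A\bullet(B\bullet C)$ and $A_1\le A_2$, $B_1\le B_2$ implying $A_1\bullet B_1\le A_2\bullet B_2$. The substitution order on contexts is the least relation $\le$ such that (1) $\Gamma\vdash A$ derivable implies $\Gamma\le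 A$ (one-element context); (2) $\cdot\le\cdot$; (3) $\Gamma_1\le\Gamma_2$ and $\Theta_1\le\Theta_2$ imply $(\Gamma_1,\Theta_1)\le(\Gamma_2,\Theta_2)$. $\mathrm{Frm}_\Omega$ is the poset of formulas with frontier $\Omega$ under the Tamari order; $\mathrm{Ctx}_\Omega$ is the poset of contexts with frontier $\Omega$ under the substitution order. $\varphi(A)=A$, $\varphi(\Gamma,A)=\varphi(\Gamma)\bullet A$ (left-associated product of a non-empty context); $\psi(p)=p$, $\psi(A\bullet B)=\psi(A),B$. *)

theory Defs
  imports Main
begin

datatype 'a frm = Atom 'a | Prod "'a frm" "'a frm"

type_synonym 'a ctx = "'a frm list"

fun fr :: "'a frm \<Rightarrow> 'a list" where
  "fr (Atom p) = [p]"
| "fr (Prod A B) = fr A @ fr B"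

definition frc :: "'a ctx \<Rightarrow> 'a list" where
  "frc G = concat (map fr G)"

inductive deriv :: "'a ctx \<Rightarrow> 'a frm \<Rightarrow> bool" where
  ProdL: "deriv (A # B # D) C \<Longrightarrow> deriv (Prod A B # D) C"
| ProdR: "deriv G A \<Longrightarrow> deriv D B \<Longrightarrow> deriv (G @ D) (Prod A B)"
| Id: "deriv [A] A"
| Cut: "deriv T A \<Longrightarrow> deriv (G @ A # D) B \<Longrightarrow> deriv (G @ T @ D) B"

inductive tam_le :: "'a frm \<Rightarrow> 'a frm \<Rightarrow> bool" where
  refl: "tam_le A A"
| trans: "tam_le A B \<Longrightarrow> tam_le B C \<Longrightarrow> tam_le A C"
| assoc: "tam_le (Prod (Prod A B) C) (Prod A (Prod B C))"
| mono: "tam_le A1 A2 \<Longrightarrow> tam_le B1 B2 \<Longrightarrow> tam_le (Prod A1 B1) (Prod A2 B2)"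

inductive sub_le :: "'a ctx \<Rightarrow> 'a ctx \<Rightarrow> bool" where
  single: "deriv G A \<Longrightarrow> sub_le G [A]"
| empty: "sub_le [] []"
| concat: "sub_le G1 G2 \<Longrightarrow> sub_le T1 T2 \<Longrightarrow> sub_le (G1 @ T1) (G2 @ T2)"

text \<open>Left-associated product of a non-empty context (undefined on the empty context).\<close>
fun phi :: "'a ctx \<Rightarrow> 'a frm" where
  "phi (A # G) = foldl Prod A G"

fun psi :: "'a frm \<Rightarrow> 'a ctx" where
  "psi (Atom p) = [Atom p]"
| "psi (Prod A B) = psi A @ [B]"

definition Frm :: "'a list \<Rightarrow> 'a frm set" where
  "Frm \<Omega> = {A. fr A = \<Omega>}"

definition Ctx :: "'a list \<Rightarrow> 'a ctx set" where
  "Ctx \<Omega> = {G. frc G = \<Omega>}"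

definition is_join :: "('b \<Rightarrow> 'b \<Rightarrow> bool) \<Rightarrow> 'b set \<Rightarrow> 'b \<Rightarrow> 'b \<Rightarrow> 'b \<Rightarrow> bool" where
  "is_join le S x y z \<longleftrightarrow> z \<in> S \<and> le x z \<and> le y z \<and>
     (\<forall>w\<in>S. le x w \<and> le y w \<longrightarrow> le z w)"

definition is_least :: "('b \<Rightarrow> 'b \<Rightarrow> bool) \<Rightarrow> 'b set \<Rightarrow> 'b \<Rightarrow> bool" where
  "is_least le S z \<longleftrightarrow> z \<in> S \<and> (\<forall>w\<in>S. le z w)"

end

theory Submission
  imports Defs
begin

lemmas tam_trans[trans] = tam_le.trans

lemma fr_ne: "fr A \<noteq> []"
  by (induction A) auto

lemma frc_Nil_iff: "frc G = [] \<longleftrightarrow> G = []"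
  by (cases G) (auto simp: frc_def fr_ne)

lemma deriv_fr: "deriv G A \<Longrightarrow> frc G = fr A"
  by (induction rule: deriv.induct) (auto simp: frc_def)

lemma deriv_ne: "deriv G A \<Longrightarrow> G \<noteq> []"
  using deriv_fr frc_Nil_iff fr_ne by metis

lemma phi_append: "G \<noteq> [] \<Longrightarrow> phi (G @ T) = foldl Prod (phi G) T"
  by (cases G) auto

lemma foldl_start_mono: "tam_le C C' \<Longrightarrow> tam_le (foldl Prod C T) (foldl Prod C' T)"
  by (induction T arbitrary: C C') (auto intro: tam_le.mono tam_le.refl)

lemma foldl_assoc: "D \<noteq> [] \<Longrightarrow> tam_le (foldl Prod C D) (Prod C (phi D))"
proof (induction D rule: rev_induct)
  case Nil then show ?case by simp
next
  case (snoc d D)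
  show ?case
  proof (cases "D = []")
    case True then show ?thesis by (simp add: tam_le.refl)
  next
    case False
    have "tam_le (foldl Prod C (D @ [d])) (Prod (Prod C (phi D)) d)"
      using snoc False by (auto intro: tam_le.mono tam_le.refl)
    also have "tam_le \<dots> (Prod C (Prod (phi D) d))" by (rule tam_le.assoc)
    finally show ?thesis using False phi_append[of D "[d]"] by simp
  qed
qed

lemma sound: "deriv G A \<Longrightarrow> tam_le (phi G) A"
proof (induction rule: deriv.induct)
  case (ProdL A B D C) then show ?case by simp
next
  case (ProdR G A D B)
  have g: "G \<noteq> []" "D \<noteq> []" using ProdR deriv_ne by auto
  have "tam_le (phi (G @ D)) (Prod (phi G) (phi D))"
    using foldl_assoc[OF g(2)] phi_append[OF g(1)] by simp
  also have "tam_le \<dots> (Prod A B)" by (rule tam_le.mono[OF ProdR.IH])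
  finally show ?case .
next
  case (Id A) then show ?case by (simp add: tam_le.refl)
next
  case (Cut T A G D B)
  have t: "T \<noteq> []" using Cut deriv_ne by auto
  have "tam_le (phi (G @ T @ D)) (phi (G @ A # D))"
  proof (cases "G = []")
    case True
    then show ?thesis using phi_append[OF t, of D] foldl_start_mono[OF Cut.IH(1), of D] by simp
  next
    case False
    have "phi (G @ T @ D) = foldl Prod (foldl Prod (phi G) T) D"
      using phi_append[OF False] by simp
    moreover have "phi (G @ A # D) = foldl Prod (Prod (phi G) A) D"
      using phi_append[OF False] by simp
    moreover have "tam_le (foldl Prod (phi G) T) (Prod (phi G) A)"
      using tam_le.trans[OF foldl_assoc[OF t] tam_le.mono[OF tam_le.refl Cut.IH(1)]] .
    ultimately show ?thesis using foldl_start_mono by metis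
  qed
  then show ?case using Cut.IH(2) tam_le.trans by blast
qed

lemma complete: "tam_le A B \<Longrightarrow> deriv [A] B"
proof (induction rule: tam_le.induct)
  case (refl A) then show ?case by (rule deriv.Id)
next
  case (trans A B C)
  then show ?case using deriv.Cut[of "[A]" B "[]" "[]" C] by simp
next
  case (assoc A B C)
  have "deriv ([B] @ [C]) (Prod B C)" by (rule deriv.ProdR[OF deriv.Id deriv.Id])
  then have "deriv ([A] @ [B, C]) (Prod A (Prod B C))" using deriv.ProdR[OF deriv.Id] by simp
  then have "deriv [Prod A B, C] (Prod A (Prod B C))" using deriv.ProdL by simp
  then show ?case using deriv.ProdL[of "Prod A B" C "[]"] by simp
next
  case (mono A1 A2 B1 B2)
  have "deriv ([A1] @ [B1]) (Prod A2 B2)" by (rule deriv.ProdR[OF mono.IH])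
  then show ?case using deriv.ProdL[of A1 B1 "[]"] by simp
qed

lemma sub_le_parts: "sub_le G D \<longleftrightarrow> (\<exists>Ps. list_all2 deriv Ps D \<and> G = concat Ps)"
proof
  assume "sub_le G D" then show "\<exists>Ps. list_all2 deriv Ps D \<and> G = concat Ps"
  proof (induction rule: sub_le.induct)
    case (single G A) then show ?case by (intro exI[of _ "[G]"]) auto
  next
    case empty then show ?case by auto
  next
    case (concat G1 G2 T1 T2)
    then obtain P Q where "list_all2 deriv P G2" "G1 = concat P" "list_all2 deriv Q T2" "T1 = concat Q"
      by blast
    then show ?case by (intro exI[of _ "P @ Q"]) (auto intro: list_all2_appendI)
  qed
next
  assume "\<exists>Ps. list_all2 deriv Ps D \<and> G = concat Ps"
  then obtain Ps where "list_all2 deriv Ps D" "G = concat Ps" by blast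
  then show "sub_le G D"
  proof (induction Ps D arbitrary: G rule: list_all2_induct)
    case Nil then show ?case by (simp add: sub_le.empty)
  next
    case (Cons p P d D)
    then show ?case using sub_le.concat[OF sub_le.single[OF Cons(1)], of "concat P" D] by simp
  qed
qed

lemma sub_le_refl: "sub_le G G"
  unfolding sub_le_parts
  by (intro exI[of _ "map (\<lambda>a. [a]) G"]) (auto simp: list_all2_conv_all_nth intro: deriv.Id)

lemma multicut: "list_all2 deriv Ps D \<Longrightarrow> deriv (H1 @ D @ H2) e \<Longrightarrow> deriv (H1 @ concat Ps @ H2) e"
proof (induction Ps D arbitrary: H1 rule: list_all2_induct)
  case Nil then show ?case by simp
next
  case (Cons p P d D)
  have "deriv (H1 @ p @ (D @ H2)) e" using deriv.Cut[OF Cons(1), of H1 "D @ H2" e] Cons(4) by simp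
  then have "deriv ((H1 @ p) @ concat P @ H2) e" using Cons(3)[of "H1 @ p"] by simp
  then show ?case by simp
qed

lemma sub_le_split: "sub_le G (D1 @ D2) \<Longrightarrow> \<exists>G1 G2. G = G1 @ G2 \<and> sub_le G1 D1 \<and> sub_le G2 D2"
proof -
  assume "sub_le G (D1 @ D2)"
  then obtain Ps where P: "list_all2 deriv Ps (D1 @ D2)" "G = concat Ps" using sub_le_parts by blast
  then obtain P1 P2 where "Ps = P1 @ P2" "list_all2 deriv P1 D1" "list_all2 deriv P2 D2"
    by (auto simp: list_all2_append2)
  then have "sub_le (concat P1) D1" "sub_le (concat P2) D2" using sub_le_parts by blast+
  moreover have "G = concat P1 @ concat P2" using P(2) \<open>Ps = P1 @ P2\<close> by simp
  ultimately show ?thesis by blast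
qed

lemma sub_le_trans: "sub_le D E \<Longrightarrow> sub_le G D \<Longrightarrow> sub_le G E"
proof (induction arbitrary: G rule: sub_le.induct)
  case (single D A)
  then obtain Ps where "list_all2 deriv Ps D" "G = concat Ps" using sub_le_parts by blast
  then have "deriv G A" using multicut[of Ps D "[]" "[]" A] single(1) by simp
  then show ?case by (rule sub_le.single)
next
  case empty then show ?case by simp
next
  case (concat G1 G2 T1 T2)
  then obtain H1 H2 where "G = H1 @ H2" "sub_le H1 G1" "sub_le H2 T1" using sub_le_split by blast
  then show ?case using concat sub_le.concat by blast
qed

lemma psi_ne: "psi A \<noteq> []"
  by (induction A) auto

lemma phi_psi: "phi (psi A) = A"
  by (induction A) (auto simp: phi_append psi_ne)

lemma frc_append: "frc (G @ T) = frc G @ frc T"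
  by (simp add: frc_def)

lemma frc_psi: "frc (psi A) = fr A"
  by (induction A) (auto simp: frc_def)

lemma fr_foldl: "fr (foldl Prod C G) = fr C @ frc G"
  by (induction G arbitrary: C) (auto simp: frc_def)

lemma fr_phi: "G \<noteq> [] \<Longrightarrow> fr (phi G) = frc G"
  by (cases G) (auto simp: fr_foldl frc_def)

lemma L1: "tam_le A X \<Longrightarrow> sub_le (psi A) (psi X)"
proof (induction rule: tam_le.induct)
  case (refl A) then show ?case by (rule sub_le_refl)
next
  case (trans A B C) then show ?case using sub_le_trans by blast
next
  case (assoc A B C)
  have "sub_le ([B] @ [C]) [Prod B C]" by (rule sub_le.single[OF deriv.ProdR[OF deriv.Id deriv.Id]])
  then show ?case using sub_le.concat[OF sub_le_refl[of "psi A"]] by simp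
next
  case (mono A1 A2 B1 B2)
  then show ?case using sub_le.concat[OF mono(3) sub_le.single[OF complete[OF mono(2)]]] by simp
qed

lemma L2C: "sub_le G D \<Longrightarrow> tam_le (foldl Prod C G) (foldl Prod C D)"
proof (induction arbitrary: C rule: sub_le.induct)
  case (single G A)
  have g: "G \<noteq> []" using single deriv_ne by auto
  show ?case using tam_le.trans[OF foldl_assoc[OF g] tam_le.mono[OF tam_le.refl sound[OF single]]] by simp
next
  case empty then show ?case by (simp add: tam_le.refl)
next
  case (concat G1 G2 T1 T2)
  show ?case using tam_le.trans[OF concat.IH(2) foldl_start_mono[OF concat.IH(1)]] by simp
qed

lemma L2: "sub_le G D \<Longrightarrow> G \<noteq> [] \<Longrightarrow> tam_le (phi G) (phi D)"
proof -
  assume s: "sub_le G D" and g: "G \<noteq> []"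
  then obtain Ps where P: "list_all2 deriv Ps D" "G = concat Ps" using sub_le_parts by blast
  then obtain p Ps' d D' where e: "Ps = p # Ps'" "D = d # D'" "deriv p d" "list_all2 deriv Ps' D'"
    using g by (cases Ps; cases D) auto
  have p: "p \<noteq> []" using e deriv_ne by auto
  have "phi G = foldl Prod (phi p) (concat Ps')" using P e phi_append[OF p] by simp
  also have "tam_le \<dots> (foldl Prod d (concat Ps'))" using foldl_start_mono sound e by blast
  also have "tam_le \<dots> (foldl Prod d D')" using L2C sub_le_parts e by blast
  finally show ?thesis using e by simp
qed

fun msr :: "'a frm \<Rightarrow> nat" where
  "msr (Atom p) = 0"
| "msr (Prod A B) = msr A + msr B + length (fr A)"

lemma tam_fr: "tam_le A B \<Longrightarrow> fr A = fr B"
  by (induction rule: tam_le.induct) auto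

lemma tam_msr: "tam_le A B \<Longrightarrow> A = B \<or> msr B < msr A"
proof (induction rule: tam_le.induct)
  case (assoc A B C)
  have "length (fr A) > 0" using fr_ne by auto
  then show ?case by simp
next
  case (mono A1 A2 B1 B2)
  then show ?case using tam_fr[OF mono(1)] by auto
qed auto

lemma tam_antisym: "tam_le A B \<Longrightarrow> tam_le B A \<Longrightarrow> A = B"
proof -
  assume a: "tam_le A B" "tam_le B A"
  show "A = B"
  proof (rule ccontr)
    assume "A \<noteq> B"
    then have "msr B < msr A" "msr A < msr B" using tam_msr[OF a(1)] tam_msr[OF a(2)] by auto
    then show False by simp
  qed
qed

theorem lemma2p9:
  fixes \<Omega> :: "'a list" and A B :: "'a frm"
  assumes "\<Omega> \<noteq> []" and "fr A = \<Omega>" and "fr B = \<Omega>"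
  shows "(\<forall>X J. is_join tam_le (Frm \<Omega>) A B X \<longrightarrow> is_join sub_le (Ctx \<Omega>) (psi A) (psi B) J
             \<longrightarrow> X = phi J)
       \<and> (\<forall>X Z. is_least tam_le (Frm \<Omega>) X \<longrightarrow> is_least sub_le (Ctx \<Omega>) Z \<longrightarrow> X = phi Z)"
proof (intro conjI allI impI)
  fix X J
  assume X: "is_join tam_le (Frm \<Omega>) A B X" and J: "is_join sub_le (Ctx \<Omega>) (psi A) (psi B) J"
  have Xf: "fr X = \<Omega>" "tam_le A X" "tam_le B X"
    and Xl: "\<And>w. fr w = \<Omega> \<Longrightarrow> tam_le A w \<Longrightarrow> tam_le B w \<Longrightarrow> tam_le X w"
    using X by (auto simp: is_join_def Frm_def)
  have Jf: "frc J = \<Omega>" "sub_le (psi A) J" "sub_le (psi B) J"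
    and Jl: "\<And>w. frc w = \<Omega> \<Longrightarrow> sub_le (psi A) w \<Longrightarrow> sub_le (psi B) w \<Longrightarrow> sub_le J w"
    using J by (auto simp: is_join_def Ctx_def)
  have jne: "J \<noteq> []" using Jf(1) assms(1) frc_Nil_iff by auto
  have "sub_le J (psi X)" using Jl[of "psi X"] frc_psi Xf L1 by metis
  then have 1: "tam_le (phi J) X" using L2 jne phi_psi by metis
  have "tam_le A (phi J)" using L2[OF Jf(2) psi_ne] phi_psi by metis
  moreover have "tam_le B (phi J)" using L2[OF Jf(3) psi_ne] phi_psi by metis
  moreover have "fr (phi J) = \<Omega>" using fr_phi[OF jne] Jf(1) by (rule HOL.trans)
  ultimately have "tam_le X (phi J)" using Xl by blast
  then show "X = phi J" using 1 tam_antisym by blast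
next
  fix X Z
  assume X: "is_least tam_le (Frm \<Omega>) X" and Z: "is_least sub_le (Ctx \<Omega>) Z"
  have Xf: "fr X = \<Omega>" and Xl: "\<And>w. fr w = \<Omega> \<Longrightarrow> tam_le X w"
    using X by (auto simp: is_least_def Frm_def)
  have Zf: "frc Z = \<Omega>" and Zl: "\<And>w. frc w = \<Omega> \<Longrightarrow> sub_le Z w"
    using Z by (auto simp: is_least_def Ctx_def)
  have zne: "Z \<noteq> []" using Zf assms(1) frc_Nil_iff by auto
  have "sub_le Z (psi X)" using Zl frc_psi Xf by metis
  then have 1: "tam_le (phi Z) X" using L2 zne phi_psi by metis
  have "fr (phi Z) = \<Omega>" using fr_phi[OF zne] Zf by (rule HOL.trans)
  then have "tam_le X (phi Z)" by (rule Xl)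
  then show "X = phi Z" using 1 tam_antisym by blast
qed

end
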